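(* Let $G$ be a median graph in $\mathcal{U}_3$ with $n\ge 3$ vertices and $v_0$ its unique vertex lying in every majority halfspace. If $u,v$ are vertices different from $v_0$ with $L_{v_0,u}\cap L_{v_0,v}=\emptyset$, then $v_0\in I(u,v)$, i.e. $d(u,v)=d(u,v_0)+d(v_0,v)$.
   Context: Graphs are finite, simple, connected, undirected; $d$ is shortest-path distance; $I(u,v)=\{x:d(u,x)+d(x,v)=d(u,v)\}$; a graph is median if every triple $x,y,z$ has $|I(x,y)\cap I(y,z)\cap I(z,x)|=1$. $\Theta$-classes: classes of the reflexive–transitive closure of the relation on edges "opposite edges of a 4-cycle"; deleting a $\Theta$-class $E_i$ of a median graph leaves two components with vertex sets (halfspaces) $H_i',H_i''$. $\mathcal{U}_3$ is the family of median graphs with $n$ vertices in which every $\Theta$-class satisfies $\min\{|H_i'|,|H_i''|\}<n/3$; the larger halfspace is the majority halfspace. For $u\ne v$, the ladder set $L_{u,v}$ is the set of $\Theta$-classes $E_i$ such that $u,v$ lie in different halfspaces of $E_i$ and $u$ is an endpoint of an edge of $E_i$. *)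

theory Defs
  imports Main
begin

definition simple_graph :: "'a set \<Rightarrow> ('a \<Rightarrow> 'a \<Rightarrow> bool) \<Rightarrow> bool" where
  "simple_graph V E \<longleftrightarrow> finite V \<and> (\<forall>x y. E x y \<longrightarrow> x \<in> V \<and> y \<in> V)
     \<and> (\<forall>x y. E x y \<longrightarrow> E y x) \<and> (\<forall>x. \<not> E x x)"

definition is_walk :: "('a \<Rightarrow> 'a \<Rightarrow> bool) \<Rightarrow> 'a list \<Rightarrow> bool" where
  "is_walk E xs \<longleftrightarrow> xs \<noteq> [] \<and> (\<forall>i. Suc i < length xs \<longrightarrow> E (xs ! i) (xs ! Suc i))"

definition connected_graph :: "'a set \<Rightarrow> ('a \<Rightarrow> 'a \<Rightarrow> bool) \<Rightarrow> bool" where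
  "connected_graph V E \<longleftrightarrow> (\<forall>u\<in>V. \<forall>v\<in>V. \<exists>xs. is_walk E xs \<and> hd xs = u \<and> last xs = v)"

definition dist :: "('a \<Rightarrow> 'a \<Rightarrow> bool) \<Rightarrow> 'a \<Rightarrow> 'a \<Rightarrow> nat" where
  "dist E u v = (LEAST n. \<exists>xs. is_walk E xs \<and> hd xs = u \<and> last xs = v \<and> length xs = Suc n)"

definition interval :: "'a set \<Rightarrow> ('a \<Rightarrow> 'a \<Rightarrow> bool) \<Rightarrow> 'a \<Rightarrow> 'a \<Rightarrow> 'a set" where
  "interval V E u v = {x \<in> V. dist E u x + dist E x v = dist E u v}"

definition median_graph :: "'a set \<Rightarrow> ('a \<Rightarrow> 'a \<Rightarrow> bool) \<Rightarrow> bool" where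
  "median_graph V E \<longleftrightarrow> simple_graph V E \<and> connected_graph V E \<and> V \<noteq> {} \<and>
     (\<forall>x\<in>V. \<forall>y\<in>V. \<forall>z\<in>V.
        card (interval V E x y \<inter> interval V E y z \<inter> interval V E z x) = 1)"

definition edges :: "('a \<Rightarrow> 'a \<Rightarrow> bool) \<Rightarrow> 'a set set" where
  "edges E = {{x, y} | x y. E x y}"

definition opposite_in_C4 :: "('a \<Rightarrow> 'a \<Rightarrow> bool) \<Rightarrow> 'a set \<Rightarrow> 'a set \<Rightarrow> bool" where
  "opposite_in_C4 E e f \<longleftrightarrow> (\<exists>a b c d. distinct [a, b, c, d] \<and>
     E a b \<and> E b c \<and> E c d \<and> E d a \<and> e = {a, b} \<and> f = {c, d})"

definition Theta :: "('a \<Rightarrow> 'a \<Rightarrow> bool) \<Rightarrow> 'a set \<Rightarrow> 'a set \<Rightarrow> bool" where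
  "Theta E = (opposite_in_C4 E)\<^sup>*\<^sup>*"

definition theta_classes :: "('a \<Rightarrow> 'a \<Rightarrow> bool) \<Rightarrow> 'a set set set" where
  "theta_classes E = {{f \<in> edges E. Theta E e f} | e. e \<in> edges E}"

definition component_without :: "'a set \<Rightarrow> ('a \<Rightarrow> 'a \<Rightarrow> bool) \<Rightarrow> 'a set set \<Rightarrow> 'a \<Rightarrow> 'a set" where
  "component_without V E F x = {y \<in> V. \<exists>xs. is_walk E xs \<and> hd xs = x \<and> last xs = y \<and>
      (\<forall>i. Suc i < length xs \<longrightarrow> {xs ! i, xs ! Suc i} \<notin> F)}"

definition halfspaces :: "'a set \<Rightarrow> ('a \<Rightarrow> 'a \<Rightarrow> bool) \<Rightarrow> 'a set set \<Rightarrow> 'a set set" where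
  "halfspaces V E F = component_without V E F ` V"

definition majority_halfspace :: "'a set \<Rightarrow> ('a \<Rightarrow> 'a \<Rightarrow> bool) \<Rightarrow> 'a set set \<Rightarrow> 'a set \<Rightarrow> bool" where
  "majority_halfspace V E F H \<longleftrightarrow> H \<in> halfspaces V E F \<and>
     (\<forall>H' \<in> halfspaces V E F. card H' \<le> card H)"

definition in_U3 :: "'a set \<Rightarrow> ('a \<Rightarrow> 'a \<Rightarrow> bool) \<Rightarrow> bool" where
  "in_U3 V E \<longleftrightarrow> median_graph V E \<and>
     (\<forall>F \<in> theta_classes E. \<exists>H \<in> halfspaces V E F. 3 * card H < card V)"

definition ladder_set :: "'a set \<Rightarrow> ('a \<Rightarrow> 'a \<Rightarrow> bool) \<Rightarrow> 'a \<Rightarrow> 'a \<Rightarrow> 'a set set set" where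
  "ladder_set V E u v = {F \<in> theta_classes E.
      component_without V E F u \<noteq> component_without V E F v \<and> (\<exists>e \<in> F. u \<in> e)}"

end

theory Submission
  imports Defs
begin

lemma walk_single[simp]: "is_walk E [x]"
  by (simp add: is_walk_def)

lemma walk_Cons2: "is_walk E (x # y # xs) \<longleftrightarrow> E x y \<and> is_walk E (y # xs)"
proof
  assume "is_walk E (x # y # xs)"
  then show "E x y \<and> is_walk E (y # xs)"
    unfolding is_walk_def by (metis Suc_less_eq length_Cons nth_Cons_0 nth_Cons_Suc zero_less_Suc list.distinct(1))
next
  assume a: "E x y \<and> is_walk E (y # xs)"
  show "is_walk E (x # y # xs)"
    unfolding is_walk_def
  proof (intro conjI allI impI)
    fix i assume "Suc i < length (x # y # xs)"
    then show "E ((x # y # xs) ! i) ((x # y # xs) ! Suc i)"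
      using a unfolding is_walk_def by (cases i) auto
  qed simp
qed

lemma walk_append:
  "is_walk E xs \<Longrightarrow> is_walk E ys \<Longrightarrow> last xs = hd ys \<Longrightarrow> is_walk E (xs @ tl ys)"
proof (induction xs)
  case Nil then show ?case by (simp add: is_walk_def)
next
  case (Cons p xs)
  show ?case
  proof (cases xs)
    case Nil
    then show ?thesis using Cons.prems
      by (cases ys) (auto simp: is_walk_def)
  next
    case (Cons q r)
    then have "is_walk E (q # r)" "E p q" using Cons.prems(1) local.Cons by (simp_all add: walk_Cons2)
    then have "is_walk E (xs @ tl ys)" using Cons.IH Cons.prems local.Cons by auto
    then show ?thesis using \<open>E p q\<close> local.Cons by (simp add: walk_Cons2)
  qed
qed

lemma walk_rev:
  assumes sym: "\<And>x y. E x y \<Longrightarrow> E y x" and w: "is_walk E xs"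
  shows "is_walk E (rev xs)"
  unfolding is_walk_def
proof (intro conjI allI impI)
  show "rev xs \<noteq> []" using w by (simp add: is_walk_def)
  fix i assume i: "Suc i < length (rev xs)"
  define j where "j = length xs - Suc (Suc i)"
  have "Suc j < length xs" using i j_def by auto
  then have "E (xs ! j) (xs ! Suc j)" using w by (simp add: is_walk_def)
  moreover have "rev xs ! i = xs ! Suc j" "rev xs ! Suc i = xs ! j"
    using i j_def by (auto simp: rev_nth Suc_diff_Suc)
  ultimately show "E (rev xs ! i) (rev xs ! Suc i)" using sym by simp
qed


locale mg =
  fixes V :: "'a set" and E :: "'a \<Rightarrow> 'a \<Rightarrow> bool"
  assumes med: "median_graph V E"
begin

abbreviation d where "d \<equiv> dist E"

lemma simple: "simple_graph V E" using med by (simp add: median_graph_def)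
lemma conn: "connected_graph V E" using med by (simp add: median_graph_def)
lemma symE: "E x y \<Longrightarrow> E y x" using simple by (simp add: simple_graph_def)
lemma EV1: "E x y \<Longrightarrow> x \<in> V" using simple by (simp add: simple_graph_def)
lemma EV2: "E x y \<Longrightarrow> y \<in> V" using simple by (simp add: simple_graph_def)
lemma irr: "\<not> E x x" using simple by (simp add: simple_graph_def)

lemma dist_walk:
  assumes "u \<in> V" "v \<in> V"
  shows "\<exists>xs. is_walk E xs \<and> hd xs = u \<and> last xs = v \<and> length xs = Suc (d u v)"
proof -
  obtain xs where xs: "is_walk E xs" "hd xs = u" "last xs = v"
    using conn assms unfolding connected_graph_def by blast
  then have "length xs = Suc (length xs - 1)" by (cases xs) (auto simp: is_walk_def)
  then have "\<exists>n xs. is_walk E xs \<and> hd xs = u \<and> last xs = v \<and> length xs = Suc n" using xs by blast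
  then show ?thesis unfolding dist_def by (rule LeastI_ex)
qed

lemma dist_le:
  assumes "is_walk E xs" "hd xs = u" "last xs = v"
  shows "d u v \<le> length xs - 1"
proof -
  have "length xs = Suc (length xs - 1)" using assms by (cases xs) (auto simp: is_walk_def)
  then show ?thesis unfolding dist_def using assms by (intro Least_le) blast
qed

lemma d_refl: "d u u = 0"
  using dist_le[of "[u]" u u] by simp

lemma d_zero: assumes "u \<in> V" "v \<in> V" "d u v = 0" shows "u = v"
proof -
  obtain xs where "is_walk E xs" "hd xs = u" "last xs = v" "length xs = Suc 0"
    using dist_walk[OF assms(1,2)] assms(3) by auto
  then show ?thesis by (cases xs) auto
qed

lemma d_edge_le: "E u v \<Longrightarrow> d u v \<le> 1"
  using dist_le[of "[u,v]" u v] by (simp add: walk_Cons2)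

lemma d_edge: "E u v \<Longrightarrow> d u v = 1"
  using d_edge_le[of u v] d_zero[of u v] EV1 EV2 irr by fastforce

lemma d_one: assumes "u \<in> V" "v \<in> V" "d u v = 1" shows "E u v"
proof -
  obtain xs where "is_walk E xs" "hd xs = u" "last xs = v" "length xs = Suc 1"
    using dist_walk[OF assms(1,2)] assms(3) by auto
  then show ?thesis
    by (cases xs; cases "tl xs") (auto simp: walk_Cons2)
qed

lemma d_sym: assumes "u \<in> V" "v \<in> V" shows "d u v = d v u"
proof -
  have le: "d x y \<le> d y x" if xV: "x \<in> V" and yV: "y \<in> V" for x y
  proof -
    obtain xs where xs: "is_walk E xs" "hd xs = y" "last xs = x" "length xs = Suc (d y x)"
      using dist_walk[OF yV xV] by auto
    then have "is_walk E (rev xs)" using walk_rev symE by blast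
    moreover have "xs \<noteq> []" using xs by auto
    ultimately show ?thesis using dist_le[of "rev xs" x y] xs by (simp add: hd_rev last_rev)
  qed
  show ?thesis using le assms by (simp add: le_antisym)
qed

lemma d_tri: assumes "u \<in> V" "v \<in> V" "w \<in> V" shows "d u w \<le> d u v + d v w"
proof -
  obtain xs where xs: "is_walk E xs" "hd xs = u" "last xs = v" "length xs = Suc (d u v)"
    using dist_walk[OF assms(1,2)] by auto
  obtain ys where ys: "is_walk E ys" "hd ys = v" "last ys = w" "length ys = Suc (d v w)"
    using dist_walk[OF assms(2,3)] by auto
  have w: "is_walk E (xs @ tl ys)" using walk_append[OF xs(1) ys(1)] xs ys by auto
  have "hd (xs @ tl ys) = u" using xs by (cases xs) auto
  moreover have "last (xs @ tl ys) = w" using xs ys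
    by (cases ys; cases "tl ys") auto
  ultimately have "d u w \<le> length (xs @ tl ys) - 1" using dist_le w by blast
  then show ?thesis using xs ys by simp
qed

lemma d_pred:
  assumes "u \<in> V" "y \<in> V" "d u y = Suc k"
  shows "\<exists>y'. E y' y \<and> y' \<in> V \<and> d u y' = k"
proof -
  obtain xs where xs: "is_walk E xs" "hd xs = u" "last xs = y" "length xs = Suc (Suc k)"
    using dist_walk[OF assms(1,2)] assms(3) by auto
  define y' where "y' = xs ! k"
  have E1: "E y' y" using xs unfolding y'_def is_walk_def
    by (metis diff_Suc_1 last_conv_nth lessI list.size(3) nat.distinct(1))
  have tw: "is_walk E (take (Suc k) xs)" using xs unfolding is_walk_def by auto
  have h1: "hd (take (Suc k) xs) = u" using xs by (cases xs) auto
  have h2: "last (take (Suc k) xs) = y'"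
  proof -
    have "take (Suc k) xs \<noteq> []" using xs by auto
    then have "last (take (Suc k) xs) = take (Suc k) xs ! (length (take (Suc k) xs) - 1)"
      by (rule last_conv_nth)
    then show ?thesis using xs by (simp add: y'_def)
  qed
  have "d u y' \<le> length (take (Suc k) xs) - 1" by (rule dist_le[OF tw h1 h2])
  then have le: "d u y' \<le> k" using xs by simp
  have V': "y' \<in> V" using EV1 E1 by blast
  have "d u y \<le> d u y' + d y' y" using d_tri assms V' by blast
  then have "d u y' \<ge> k" using d_edge[OF E1] assms by simp
  then show ?thesis using le E1 V' by (intro exI[of _ y']) auto
qed

lemma median_ex:
  assumes "x \<in> V" "y \<in> V" "z \<in> V"
  shows "\<exists>m. m \<in> interval V E x y \<and> m \<in> interval V E y z \<and> m \<in> interval V E z x"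
proof -
  have "card (interval V E x y \<inter> interval V E y z \<inter> interval V E z x) = 1"
    using med assms unfolding median_graph_def by blast
  then obtain m where "interval V E x y \<inter> interval V E y z \<inter> interval V E z x = {m}"
    by (rule card_1_singletonE)
  then show ?thesis by blast
qed

lemma bip:
  assumes "E a x" "z \<in> V"
  shows "d a z \<noteq> d x z"
proof -
  have V: "a \<in> V" "x \<in> V" using assms EV1 EV2 by auto
  obtain m where m: "m \<in> interval V E a x" "m \<in> interval V E x z" "m \<in> interval V E z a"
    using median_ex V assms by blast
  have mV: "m \<in> V" using m by (simp add: interval_def)
  have "d a m + d m x = 1" using m(1) d_edge[OF assms(1)] by (simp add: interval_def)
  then have "m = a \<or> m = x" using d_zero[OF V(1) mV] d_zero[OF mV V(2)] by (cases "d a m") auto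
  then show ?thesis
  proof
    assume "m = a"
    then have "d x a + d a z = d x z" using m(2) by (simp add: interval_def)
    moreover have "d x a = 1" using d_edge symE assms by blast
    ultimately show ?thesis by simp
  next
    assume "m = x"
    then have "d z x + d x a = d z a" using m(3) by (simp add: interval_def)
    moreover have "d x a = 1" using d_edge symE assms by blast
    ultimately show ?thesis using d_sym V assms by auto
  qed
qed


lemma cross:
  assumes ax: "E a x"
  shows "y \<in> V \<Longrightarrow> E y z \<Longrightarrow> d a y = k \<Longrightarrow> d a y < d x y \<Longrightarrow> \<not> d a z < d x z
         \<Longrightarrow> Theta E {a, x} {y, z}"
proof (induction k arbitrary: y z)
  have aV: "a \<in> V" "x \<in> V" using ax EV1 EV2 by auto
  case 0
  then have ya: "y = a" using d_zero aV by blast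
  have zV: "z \<in> V" using 0 EV2 by blast
  have "d a z = 1" using d_edge 0 ya by blast
  moreover have "d a z \<noteq> d x z" using bip ax zV by blast
  ultimately have "d x z = 0" using 0 by linarith
  then have "z = x" using d_zero aV zV by blast
  then show ?case unfolding Theta_def using ya by simp
next
  case (Suc k)
  have aV: "a \<in> V" "x \<in> V" using ax EV1 EV2 by auto
  have zV: "z \<in> V" using Suc EV2 by blast
  have yV: "y \<in> V" using Suc by blast
  have dax: "d a x = 1" "d x a = 1" using d_edge ax symE by auto
  have dyz: "d y z = 1" "d z y = 1" using d_edge Suc.prems(2) symE by auto
  have "d x y \<le> d x a + d a y" using d_tri aV yV by blast
  then have dxy: "d x y = k + 2" using Suc.prems dax by linarith
  have "d a z \<le> d a y + d y z" using d_tri aV yV zV by blast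
  moreover have "d x y \<le> d x z + d z y" using d_tri aV yV zV by blast
  moreover have "d a z \<noteq> d x z" using bip ax zV by blast
  ultimately have daz: "d a z = k + 2" and dxz: "d x z = k + 1"
    using Suc.prems dxy dyz by linarith+
  obtain y' where y': "E y' y" "y' \<in> V" "d a y' = k" using d_pred aV yV Suc.prems(3) by blast
  have "d x y' \<le> d x a + d a y'" using d_tri aV y'(2) by blast
  moreover have "d x y \<le> d x y' + d y' y" using d_tri aV yV y'(2) by blast
  moreover have "d y' y = 1" using d_edge y' by blast
  ultimately have dxy': "d x y' = k + 1" using dax y' dxy by linarith
  have "d y' z \<le> d y' y + d y z" using d_tri yV zV y'(2) by blast
  moreover have "d a z \<le> d a y' + d y' z" using d_tri aV zV y'(2) by blast
  ultimately have dy'z: "d y' z = 2" using \<open>d y' y = 1\<close> dyz daz y' by linarith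
  obtain m where m: "m \<in> interval V E y' z" "m \<in> interval V E z x" "m \<in> interval V E x y'"
    using median_ex y'(2) zV aV by blast
  have mV: "m \<in> V" using m by (simp add: interval_def)
  have m1: "d y' m + d m z = 2" using m(1) dy'z by (simp add: interval_def)
  have m2: "d z m + d m x = k + 1" using m(2) dxz d_sym[OF zV aV(2)] by (simp add: interval_def)
  have m3: "d x m + d m y' = k + 1" using m(3) dxy' by (simp add: interval_def)
  have s1: "d m z = d z m" "d m x = d x m" "d m y' = d y' m" using d_sym mV zV aV y'(2) by auto
  have "d y' m \<noteq> 0"
  proof
    assume "d y' m = 0" then have "m = y'" using d_zero y'(2) mV by blast
    then show False using m2 s1 dy'z d_sym y'(2) zV dxy' d_refl by auto
  qed
  moreover have "d m z \<noteq> 0"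
  proof
    assume "d m z = 0" then have "m = z" using d_zero zV mV by blast
    then show False using m3 dy'z dxz d_sym[OF zV y'(2)] by simp
  qed
  ultimately have dm1: "d y' m = 1" "d m z = 1" using m1 by linarith+
  have Em: "E y' m" "E m z" using d_one dm1 y'(2) mV zV by auto
  have dxm: "d x m = k" using m2 s1 dm1 by linarith
  have "d a z \<le> d a m + d m z" using d_tri aV mV zV by blast
  moreover have "d a m \<le> d a y' + d y' m" using d_tri aV mV y'(2) by blast
  ultimately have dam: "d a m = k + 1" using daz dm1 y' by linarith
  have IH: "Theta E {a, x} {y', m}"
    using Suc.IH[OF y'(2) Em(1) y'(3)] y' dxy' dam dxm by simp
  have neq: "y' \<noteq> z" "m \<noteq> y" using y' daz dxm dxy by auto
  have "opposite_in_C4 E {y', m} {y, z}"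
    unfolding opposite_in_C4_def
    apply (rule exI[of _ y'], rule exI[of _ m], rule exI[of _ z], rule exI[of _ y])
    using Em Suc.prems(2) y'(1) neq irr symE by (auto simp: insert_commute)
  then show ?case using IH unfolding Theta_def by (rule rtranclp.rtrancl_into_rtrancl[rotated])
qed

lemma walk_stay:
  assumes ax: "E a x"
  defines "F \<equiv> {f \<in> edges E. Theta E {a, x} f}"
  shows "is_walk E ws \<Longrightarrow> hd ws \<in> V \<Longrightarrow> d a (hd ws) < d x (hd ws)
    \<Longrightarrow> (\<forall>i. Suc i < length ws \<longrightarrow> {ws ! i, ws ! Suc i} \<notin> F)
    \<Longrightarrow> d a (last ws) < d x (last ws)"
proof (induction ws)
  case Nil then show ?case by (simp add: is_walk_def)
next
  case (Cons p rest)
  show ?case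
  proof (cases rest)
    case Nil then show ?thesis using Cons.prems by simp
  next
    case (Cons q r)
    have Epq: "E p q" and wr: "is_walk E rest" using Cons.prems(1) local.Cons by (simp_all add: walk_Cons2)
    have nF: "{p, q} \<notin> F" using Cons.prems(4) local.Cons by force
    have qV: "q \<in> V" using Epq EV2 by blast
    have "d a q < d x q"
    proof (rule ccontr)
      assume "\<not> d a q < d x q"
      then have "Theta E {a, x} {p, q}"
        using cross[OF ax, of p q "d a p"] Cons.prems Epq by simp
      moreover have "{p, q} \<in> edges E" using Epq unfolding edges_def by blast
      ultimately show False using nF unfolding F_def by blast
    qed
    moreover have "\<forall>i. Suc i < length rest \<longrightarrow> {rest ! i, rest ! Suc i} \<notin> F"
    proof (intro allI impI)
      fix i assume "Suc i < length rest"
      then show "{rest ! i, rest ! Suc i} \<notin> F" using Cons.prems(4)[rule_format, of "Suc i"] by simp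
    qed
    ultimately have "d a (last rest) < d x (last rest)"
      using Cons.IH wr qV local.Cons by simp
    then show ?thesis using local.Cons by simp
  qed
qed

lemma separate:
  assumes ax: "E a x" and wV: "w \<in> V" and nw: "\<not> d a w < d x w"
  defines "F \<equiv> {f \<in> edges E. Theta E {a, x} f}"
  shows "component_without V E F a \<noteq> component_without V E F w"
proof
  assume eq: "component_without V E F a = component_without V E F w"
  have "w \<in> component_without V E F w" using wV unfolding component_without_def
    by (intro CollectI conjI exI[of _ "[w]"]) auto
  then have "w \<in> component_without V E F a" using eq by simp
  then obtain ws where ws: "is_walk E ws" "hd ws = a" "last ws = w"
    "\<forall>i. Suc i < length ws \<longrightarrow> {ws ! i, ws ! Suc i} \<notin> F"
    unfolding component_without_def by blast
  have aV: "a \<in> V" using ax EV1 by blast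
  have "d a a < d x a" using d_refl d_edge symE ax by simp
  then have "d a w < d x w" using walk_stay[OF ax ws(1)] ws aV unfolding F_def by simp
  then show False using nw by simp
qed

end

theorem mainTheorem12:
  fixes V :: "'a set" and E :: "'a \<Rightarrow> 'a \<Rightarrow> bool" and v0 u v :: 'a
  assumes "in_U3 V E"
    and "card V \<ge> 3"
    and "v0 \<in> V"
    and "\<forall>F \<in> theta_classes E. \<forall>H. majority_halfspace V E F H \<longrightarrow> v0 \<in> H"
    and "u \<in> V" and "v \<in> V" and "u \<noteq> v0" and "v \<noteq> v0"
    and "ladder_set V E v0 u \<inter> ladder_set V E v0 v = {}"
  shows "v0 \<in> interval V E u v \<and> dist E u v = dist E u v0 + dist E v0 v"
proof -
  interpret mg V E using assms(1) by (unfold_locales) (simp add: in_U3_def)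
  obtain m where m: "m \<in> interval V E v0 u" "m \<in> interval V E u v" "m \<in> interval V E v v0"
    using median_ex assms by blast
  have mV: "m \<in> V" using m by (simp add: interval_def)
  have "m = v0"
  proof (rule ccontr)
    assume ne: "m \<noteq> v0"
    then obtain k where k: "d m v0 = Suc k" using d_zero mV assms(3) by (cases "d m v0") auto
    obtain x where x: "E x v0" "x \<in> V" "d m x = k" using d_pred[OF mV assms(3) k] by blast
    have ax: "E v0 x" using x symE by blast
    have dv0x: "d v0 x = 1" "d x v0 = 1" using d_edge ax x by auto
    have nsep: "\<not> d v0 w < d x w" if wV: "w \<in> V" and mw: "d v0 m + d m w = d v0 w" for w
    proof -
      have "d x w \<le> d x m + d m w" using d_tri x(2) mV wV by blast
      moreover have "d x m = k" using x d_sym mV by auto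
      moreover have "d v0 m = Suc k" using k d_sym mV assms(3) by auto
      ultimately show ?thesis using mw by linarith
    qed
    have mu: "d v0 m + d m u = d v0 u" using m(1) by (simp add: interval_def)
    have "d v m + d m v0 = d v v0" using m(3) by (simp add: interval_def)
    then have mv: "d v0 m + d m v = d v0 v" using d_sym mV assms by simp
    define F where "F = {f \<in> edges E. Theta E {v0, x} f}"
    have e: "{v0, x} \<in> edges E" using ax unfolding edges_def by blast
    have Fc: "F \<in> theta_classes E" unfolding F_def theta_classes_def using e by blast
    have Fe: "\<exists>e\<in>F. v0 \<in> e" using e unfolding F_def Theta_def by blast
    have "F \<in> ladder_set V E v0 u"
      unfolding ladder_set_def using Fc Fe separate[OF ax assms(5) nsep[OF assms(5) mu]] F_def by blast
    moreover have "F \<in> ladder_set V E v0 v"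
      unfolding ladder_set_def using Fc Fe separate[OF ax assms(6) nsep[OF assms(6) mv]] F_def by blast
    ultimately show False using assms(9) by blast
  qed
  then have "v0 \<in> interval V E u v" using m by simp
  then show ?thesis by (simp add: interval_def)
qed

end
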